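(* Let $\delta=x^{\mathbf d}f(\theta)$ be a homogeneous differential operator of degree $\mathbf d$ with $\mathbf d\neq\mathbf 0$, $-\mathbf d\in S$, $\mathbf d=q\mathbf e$ ($q\in\mathbb Z_{\ge1}$, $\mathbf e$ primitive). Suppose there is a subset $\mathcal B\subseteq\mathbb N^n$ compatible with $\mathbf d$ such that (1) $\operatorname{val}(\mathbf a)>-\infty$ for all $\mathbf a\in W_{\mathcal B}$; (2) for all $\mathbf a\in V'_{\mathrm{mon}}(f)\cap W_{\mathcal B}$ and all $i=0,\dots,q-1$, $\mathbf a-i\mathbf e\in V_{\mathrm{mon}}(f)$; (3) for all $\mathbf a,\mathbf b\in V'_{\mathrm{mon}}(f)\cap W_{\mathcal B}$, $\mathbf a-\mathbf b\notin S-\mathbf e$. Then $\delta$ fixes the ideal $I=(x^{\mathbf a}\mid \mathbf a\in V'_{\mathrm{mon}}(f)\cap W_{\mathcal B})$, and $\operatorname{Exp} I=\{\mathbf b\in W_{\mathcal B}:\operatorname{pval}(\mathbf b)\ge 0\}$.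
   Context: Standing notation. Fix $d\ge 1$. Let $\sigma\subseteq\mathbb R^d$ be a full-dimensional, strongly convex rational polyhedral cone, so $\sigma^\vee$ is full-dimensional and strongly convex. $S=\sigma^\vee\cap\mathbb Z^d$, $R=\mathbb C[S]$ with monomial basis $x^{\mathbf a}$, $\mathbf a\in S$. $h_1,\dots,h_n$ are the primitive support functions of the facets of $\sigma^\vee$, so $S=\{\mathbf a\in\mathbb Z^d:h_i(\mathbf a)\ge0\ \forall i\}$. $(g,m)!=\prod_{j=0}^m(g-j)$ for $m\ge0$, $=1$ for $m<0$; $H_{\mathbf d}=\prod_i(h_i,h_i(-\mathbf d)-1)!$. For $f$ divisible by $H_{\mathbf d}$, $\delta=x^{\mathbf d}f(\theta)$ acts by $\delta(x^{\mathbf a})=f(\mathbf a)x^{\mathbf a+\mathbf d}$. $\operatorname{Exp} I=\{\mathbf a\in S:x^{\mathbf a}\in I\}$; $I$ is $\delta$-fixed if $\delta(I)=I$. $V_{\mathrm{mon}}(f)=\{\mathbf a\in\mathbb Z^d:f(\mathbf a)=0\}$; $S-\mathbf e=\{\mathbf s-\mathbf e:\mathbf s\in S\}$. For $\mathbf a\in\mathbb Z^d$, $\operatorname{val}(\mathbf a)=\inf\{t\in\mathbb R:\mathbf a+t\mathbf d\in V_{\mathrm{mon}}(f)\}\in\mathbb R\cup\{\pm\infty\}$ ($\inf\emptyset=+\infty$). When $\operatorname{val}(\mathbf a)$ is finite, $\operatorname{pval}(\mathbf a)=\max\{t\in[\operatorname{val}(\mathbf a),\operatorname{val}(\mathbf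 a)+1):\mathbf a+t\mathbf d\in V_{\mathrm{mon}}(f)\}$ and $\operatorname{vpt}(\mathbf a)=\mathbf a+\operatorname{pval}(\mathbf a)\mathbf d$. $V'_{\mathrm{mon}}(f)=\{\operatorname{vpt}(\mathbf a):\mathbf a\in\mathbb Z^d,\ \operatorname{val}(\mathbf a)\text{ finite}\}$. A tuple $\beta\in\mathbb N^n$ is compatible with $\mathbf d$ if for every $i$, $\beta_i=0$ or $h_i(\mathbf d)=0$; $\mathcal B\subseteq\mathbb N^n$ is compatible with $\mathbf d$ if each element is. $W_\beta=\{\mathbf a\in S: h_i(\mathbf a)\ge\beta_i\ \forall i\}$, $W_{\mathcal B}=\bigcup_{\beta\in\mathcal B}W_\beta$. *)

theory Defs
  imports "HOL-Analysis.Analysis" "HOL-Library.Poly_Mapping"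
begin

(* h_i is given by its primitive integer coefficient vector; h_i(a) = <h_i, a> *)
definition lf :: "int^'d \<Rightarrow> int^'d \<Rightarrow> int" where
  "lf h a = (\<Sum>j\<in>UNIV. h$j * a$j)"

definition lfR :: "int^'d \<Rightarrow> real^'d \<Rightarrow> real" where
  "lfR h x = (\<Sum>j\<in>UNIV. real_of_int (h$j) * x$j)"

definition lfC :: "int^'d \<Rightarrow> complex^'d \<Rightarrow> complex" where
  "lfC h z = (\<Sum>j\<in>UNIV. of_int (h$j) * z$j)"

definition rv :: "int^'d \<Rightarrow> real^'d" where
  "rv a = (\<chi> j. real_of_int (a$j))"

definition cv :: "int^'d \<Rightarrow> complex^'d" where
  "cv a = (\<chi> j. of_int (a$j))"

definition primitive_vec :: "int^'d \<Rightarrow> bool" where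
  "primitive_vec v \<longleftrightarrow> (\<forall>k::int. (\<forall>j. k dvd v$j) \<longrightarrow> is_unit k)"

definition dual_cone :: "nat \<Rightarrow> (nat \<Rightarrow> int^'d) \<Rightarrow> (real^'d) set" where
  "dual_cone n h = {x. \<forall>i<n. lfR (h i) x \<ge> 0}"

(* h_1..h_n are the primitive support functions of the facets of a full-dimensional,
   strongly convex (rational polyhedral) cone sigma^vee *)
definition cone_data :: "nat \<Rightarrow> (nat \<Rightarrow> int^'d) \<Rightarrow> bool" where
  "cone_data n h \<longleftrightarrow>
     interior (dual_cone n h) \<noteq> {} \<and>
     (\<forall>x\<in>dual_cone n h. -x \<in> dual_cone n h \<longrightarrow> x = 0) \<and>
     inj_on h {..<n} \<and>
     (\<forall>i<n. primitive_vec (h i)) \<and>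
     (\<forall>i<n. {x\<in>dual_cone n h. lfR (h i) x = 0} facet_of dual_cone n h) \<and>
     (\<forall>F. F facet_of dual_cone n h \<longrightarrow> (\<exists>i<n. F = {x\<in>dual_cone n h. lfR (h i) x = 0}))"

definition semigp :: "nat \<Rightarrow> (nat \<Rightarrow> int^'d) \<Rightarrow> (int^'d) set" where
  "semigp n h = {a. \<forall>i<n. lf (h i) a \<ge> 0}"

definition ringR :: "nat \<Rightarrow> (nat \<Rightarrow> int^'d) \<Rightarrow> ((int^'d) \<Rightarrow>\<^sub>0 complex) set" where
  "ringR n h = {p. Poly_Mapping.keys p \<subseteq> semigp n h}"

definition xmon :: "int^'d \<Rightarrow> (int^'d) \<Rightarrow>\<^sub>0 complex" where
  "xmon a = Poly_Mapping.single a 1"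

definition mon_ideal :: "nat \<Rightarrow> (nat \<Rightarrow> int^'d) \<Rightarrow> (int^'d) set \<Rightarrow> ((int^'d) \<Rightarrow>\<^sub>0 complex) set" where
  "mon_ideal n h G = {(\<Sum>a\<in>F. r a * xmon a) | F r.
      finite F \<and> F \<subseteq> G \<and> (\<forall>a\<in>F. r a \<in> ringR n h)}"

definition Exp :: "nat \<Rightarrow> (nat \<Rightarrow> int^'d) \<Rightarrow> ((int^'d) \<Rightarrow>\<^sub>0 complex) set \<Rightarrow> (int^'d) set" where
  "Exp n h I = {a \<in> semigp n h. xmon a \<in> I}"

definition evalp :: "(('d::finite \<Rightarrow> nat) \<Rightarrow>\<^sub>0 complex) \<Rightarrow> complex^'d \<Rightarrow> complex" where
  "evalp f z = (\<Sum>\<alpha>\<in>Poly_Mapping.keys f. Poly_Mapping.lookup f \<alpha> * (\<Prod>j\<in>UNIV. (z$j) ^ (\<alpha> j)))"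

(* (g,m)! = prod_{j=0}^m (g - j) for m \<ge> 0, and 1 for m < 0 *)
definition ffact :: "complex \<Rightarrow> int \<Rightarrow> complex" where
  "ffact g m = (\<Prod>j\<in>{0..m}. g - of_int j)"

definition Hd :: "nat \<Rightarrow> (nat \<Rightarrow> int^'d) \<Rightarrow> int^'d \<Rightarrow> complex^'d \<Rightarrow> complex" where
  "Hd n h dd z = (\<Prod>i<n. ffact (lfC (h i) z) (lf (h i) (-dd) - 1))"

(* divisibility in the polynomial ring C[theta] (C infinite, so polynomial functions suffice) *)
definition divisible_by_Hd :: "nat \<Rightarrow> (nat \<Rightarrow> int^'d::finite) \<Rightarrow> int^'d \<Rightarrow> (('d \<Rightarrow> nat) \<Rightarrow>\<^sub>0 complex) \<Rightarrow> bool" where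
  "divisible_by_Hd n h dd f \<longleftrightarrow> (\<exists>g. \<forall>z. evalp f z = Hd n h dd z * evalp g z)"

(* delta = x^d f(theta): x^a \<mapsto> f(a) x^(a+d), extended linearly *)
definition delta :: "int^'d \<Rightarrow> (('d::finite \<Rightarrow> nat) \<Rightarrow>\<^sub>0 complex) \<Rightarrow> ((int^'d) \<Rightarrow>\<^sub>0 complex) \<Rightarrow> ((int^'d) \<Rightarrow>\<^sub>0 complex)" where
  "delta dd f p = (\<Sum>a\<in>Poly_Mapping.keys p. Poly_Mapping.single (a + dd) (Poly_Mapping.lookup p a * evalp f (cv a)))"

definition Vmon :: "(('d::finite \<Rightarrow> nat) \<Rightarrow>\<^sub>0 complex) \<Rightarrow> (int^'d) set" where
  "Vmon f = {a. evalp f (cv a) = 0}"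

definition online :: "int^'d \<Rightarrow> (('d::finite \<Rightarrow> nat) \<Rightarrow>\<^sub>0 complex) \<Rightarrow> int^'d \<Rightarrow> real \<Rightarrow> bool" where
  "online dd f a t \<longleftrightarrow> (\<exists>b\<in>Vmon f. rv b = rv a + t *\<^sub>R rv dd)"

definition val :: "int^'d \<Rightarrow> (('d::finite \<Rightarrow> nat) \<Rightarrow>\<^sub>0 complex) \<Rightarrow> int^'d \<Rightarrow> ereal" where
  "val dd f a = Inf {ereal t | t. online dd f a t}"

(* only meaningful when val is finite *)
definition pval :: "int^'d \<Rightarrow> (('d::finite \<Rightarrow> nat) \<Rightarrow>\<^sub>0 complex) \<Rightarrow> int^'d \<Rightarrow> real" where
  "pval dd f a = Max {t. real_of_ereal (val dd f a) \<le> t \<and> t < real_of_ereal (val dd f a) + 1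
                         \<and> online dd f a t}"

definition vpt :: "int^'d \<Rightarrow> (('d::finite \<Rightarrow> nat) \<Rightarrow>\<^sub>0 complex) \<Rightarrow> int^'d \<Rightarrow> real^'d" where
  "vpt dd f a = rv a + pval dd f a *\<^sub>R rv dd"

definition Vmon' :: "int^'d \<Rightarrow> (('d::finite \<Rightarrow> nat) \<Rightarrow>\<^sub>0 complex) \<Rightarrow> (int^'d) set" where
  "Vmon' dd f = {b. \<exists>a. val dd f a \<noteq> \<infinity> \<and> val dd f a \<noteq> -\<infinity> \<and> rv b = vpt dd f a}"

definition compatible :: "nat \<Rightarrow> (nat \<Rightarrow> int^'d) \<Rightarrow> int^'d \<Rightarrow> (nat \<Rightarrow> nat) set \<Rightarrow> bool" where
  "compatible n h dd B \<longleftrightarrow> (\<forall>\<beta>\<in>B. \<forall>i<n. \<beta> i = 0 \<or> lf (h i) dd = 0)"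

definition Wbeta :: "nat \<Rightarrow> (nat \<Rightarrow> int^'d) \<Rightarrow> (nat \<Rightarrow> nat) \<Rightarrow> (int^'d) set" where
  "Wbeta n h \<beta> = {a \<in> semigp n h. \<forall>i<n. lf (h i) a \<ge> int (\<beta> i)}"

definition WB :: "nat \<Rightarrow> (nat \<Rightarrow> int^'d) \<Rightarrow> (nat \<Rightarrow> nat) set \<Rightarrow> (int^'d) set" where
  "WB n h B = (\<Union>\<beta>\<in>B. Wbeta n h \<beta>)"

end

theory Submission
  imports Defs
begin

definition sv :: "int \<Rightarrow> int^'d \<Rightarrow> int^'d" where
  "sv m v = (\<chi> j. m * v$j)"

lemma sv_comp[simp]: "sv m v $ j = m * v$j" by (simp add: sv_def)

lemma lf_add: "lf h (a + b) = lf h a + lf h b"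
  by (simp add: lf_def sum.distrib algebra_simps)
lemma lf_minus: "lf h (- a) = - lf h a"
  by (simp add: lf_def sum_negf)
lemma lf_diff: "lf h (a - b) = lf h a - lf h b"
  by (simp add: lf_def sum_subtractf algebra_simps)
lemma lf_sv: "lf h (sv m v) = m * lf h v"
  by (simp add: lf_def sum_distrib_left algebra_simps)
lemma lfR_rv: "lfR h (rv a) = real_of_int (lf h a)"
  by (simp add: lfR_def lf_def rv_def)
lemma lfC_cv: "lfC h (cv a) = of_int (lf h a)"
  by (simp add: lfC_def lf_def cv_def)

lemma int_min_exists:
  fixes X :: "int set"
  assumes "x \<in> X" "\<forall>y\<in>X. L \<le> y"
  shows "\<exists>m\<in>X. \<forall>y\<in>X. m \<le> y"
proof -
  define k where "k = (LEAST k::nat. L + int k \<in> X)"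
  have x: "L + int (nat (x - L)) \<in> X" using assms by simp
  have k1: "L + int k \<in> X" unfolding k_def by (rule LeastI, rule x)
  have "\<forall>y\<in>X. L + int k \<le> y"
  proof
    fix y assume y: "y \<in> X"
    have "L + int (nat (y - L)) \<in> X" using y assms by simp
    then have "k \<le> nat (y - L)" unfolding k_def by (rule Least_le)
    moreover have "L \<le> y" using y assms by blast
    ultimately show "L + int k \<le> y" by linarith
  qed
  then show ?thesis using k1 by blast
qed

lemma int_of_real_primitive:
  fixes u :: real and e :: "int^'d"
  assumes prim: "primitive_vec e" and nz: "e \<noteq> 0"
    and int: "\<forall>j. \<exists>z::int. u * real_of_int (e$j) = real_of_int z"
  shows "\<exists>m::int. u = real_of_int m"
proof -
  obtain j0 where j0: "e$j0 \<noteq> 0" using nz by (metis vec_eq_iff zero_index)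
  obtain z0 where z0: "u * real_of_int (e$j0) = real_of_int z0" using int by blast
  have "u = real_of_int z0 / real_of_int (e$j0)" using z0 j0 by (simp add: field_simps)
  then have "u \<in> \<rat>" by simp
  then obtain x y where y: "y > 0" and cp: "coprime x y" and u: "u = of_int x / of_int y"
    using Rats_cases' by blast
  have "\<forall>j. y dvd e$j"
  proof
    fix j
    obtain z where z: "u * real_of_int (e$j) = real_of_int z" using int by blast
    then have "real_of_int x * real_of_int (e$j) = real_of_int y * real_of_int z"
      using y by (simp add: u field_simps)
    then have "x * e$j = y * z" by (metis of_int_eq_iff of_int_mult)
    then have "y dvd x * e$j" by simp
    then show "y dvd e$j" using cp by (meson coprime_commute coprime_dvd_mult_right_iff)
  qed
  then have "is_unit y" using prim unfolding primitive_vec_def by blast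
  then have "y = 1" using y by simp
  then show ?thesis using u by auto
qed



locale T7 =
  fixes n :: nat and h :: "nat \<Rightarrow> int^'d::finite"
    and dd e :: "int^'d" and q :: int
    and f :: "('d \<Rightarrow> nat) \<Rightarrow>\<^sub>0 complex"
    and B :: "(nat \<Rightarrow> nat) set"
  assumes cone: "cone_data n h"
    and d_nz: "dd \<noteq> 0"
    and md_S: "-dd \<in> semigp n h"
    and q_pos: "q \<ge> 1" and e_prim: "primitive_vec e" and d_eq: "dd = (\<chi> j. q * e$j)"
    and f_div: "divisible_by_Hd n h dd f"
    and B_compat: "compatible n h dd B"
    and h1: "\<forall>a\<in>WB n h B. val dd f a > -\<infinity>"
    and h2: "\<forall>a\<in>Vmon' dd f \<inter> WB n h B. \<forall>i::int. 0 \<le> i \<and> i \<le> q - 1 \<longrightarrow>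
               a - (\<chi> j. i * e$j) \<in> Vmon f"
    and h3: "\<forall>a\<in>Vmon' dd f \<inter> WB n h B. \<forall>b\<in>Vmon' dd f \<inter> WB n h B.
               a - b \<notin> {s - e | s. s \<in> semigp n h}"
begin

abbreviation S where "S \<equiv> semigp n h"
definition c where "c i = lf (h i) (-e)"
definition Zs where "Zs a = {m. a + sv m e \<in> Vmon f}"

lemma dd_sv: "dd = sv q e" using d_eq by (simp add: sv_def)

lemma e_nz: "e \<noteq> 0" using d_nz dd_sv by (auto simp: sv_def vec_eq_iff)

lemma c_nonneg: "i < n \<Longrightarrow> 0 \<le> c i"
proof -
  assume i: "i < n"
  have "0 \<le> lf (h i) (-dd)" using md_S i by (simp add: semigp_def)
  also have "lf (h i) (-dd) = q * c i" by (simp add: dd_sv c_def lf_minus lf_sv)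
  finally show ?thesis using q_pos by (simp add: zero_le_mult_iff)
qed

lemma lf_dd: "lf (h i) (-dd) = q * c i" by (simp add: dd_sv c_def lf_minus lf_sv)

lemma lf_shift: "lf (h i) (a + sv m e) = lf (h i) a - m * c i"
  by (simp add: lf_add lf_sv c_def lf_minus)

lemma S_add: "a \<in> S \<Longrightarrow> b \<in> S \<Longrightarrow> a + b \<in> S"
  by (simp add: semigp_def lf_add)

lemma sv_me_S: "m \<ge> 0 \<Longrightarrow> sv m (-e) \<in> S"
  using c_nonneg by (simp add: semigp_def lf_sv c_def)

lemma ex_pos: "\<exists>i<n. c i > 0"
proof (rule ccontr)
  assume "\<not> ?thesis"
  then have c0: "\<forall>i<n. c i = 0" using c_nonneg by force
  have rm: "- rv e = rv (-e)" by (simp add: rv_def vec_eq_iff)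
  have "rv e \<in> dual_cone n h" "- rv e \<in> dual_cone n h"
    unfolding rm using c0 by (auto simp: dual_cone_def lfR_rv c_def lf_minus)
  then have "rv e = 0" using cone unfolding cone_data_def by blast
  then have "e = 0" by (simp add: rv_def vec_eq_iff)
  then show False using e_nz by simp
qed

lemma Hd_zero:
  assumes "i < n" "0 \<le> lf (h i) x" "lf (h i) x < lf (h i) (-dd)"
  shows "x \<in> Vmon f"
proof -
  have "ffact (lfC (h i) (cv x)) (lf (h i) (- dd) - 1) = 0"
    unfolding ffact_def lfC_cv
    by (rule prod_zero) (use assms in \<open>auto intro!: bexI[of _ "lf (h i) x"]\<close>)
  then have "Hd n h dd (cv x) = 0" unfolding Hd_def
    by (intro prod_zero) (use assms in auto)
  then show ?thesis using f_div unfolding divisible_by_Hd_def Vmon_def by auto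
qed

lemma block:
  assumes i: "i < n" "c i > 0" and m: "lf (h i) a div c i - q + 1 \<le> m" "m \<le> lf (h i) a div c i"
  shows "m \<in> Zs a"
proof -
  define k where "k = lf (h i) a div c i"
  have md: "lf (h i) a = k * c i + lf (h i) a mod c i" by (simp add: k_def)
  have r: "0 \<le> lf (h i) a mod c i" "lf (h i) a mod c i < c i" using i by auto
  have m1: "m * c i \<le> k * c i" using m i by (simp add: k_def mult_right_mono)
  have m2: "(k - q + 1) * c i \<le> m * c i" using m i by (simp add: k_def mult_right_mono)
  have m2': "k * c i - q * c i + c i \<le> m * c i" using m2 by (simp only: left_diff_distrib distrib_right)
  have "0 \<le> lf (h i) (a + sv m e)" "lf (h i) (a + sv m e) < lf (h i) (-dd)"
    unfolding lf_shift lf_dd using md r m1 m2' by linarith+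
  then show ?thesis unfolding Zs_def using Hd_zero i by blast
qed

lemma Zs_ne: "Zs a \<noteq> {}"
proof -
  obtain i where "i < n" "c i > 0" using ex_pos by blast
  then have "lf (h i) a div c i \<in> Zs a" using q_pos by (intro block) auto
  then show ?thesis by blast
qed

lemma online_iff: "online dd f a t \<longleftrightarrow> (\<exists>m\<in>Zs a. t = of_int m / of_int q)"
proof
  assume "online dd f a t"
  then obtain b where b: "b \<in> Vmon f" "rv b = rv a + t *\<^sub>R rv dd" unfolding online_def by blast
  have comp: "\<forall>j. real_of_int (b$j) = real_of_int (a$j) + (t * of_int q) * of_int (e$j)"
    using b(2) by (auto simp: vec_eq_iff rv_def dd_sv)
  have "\<forall>j. \<exists>z::int. (t * of_int q) * real_of_int (e$j) = real_of_int z"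
  proof
    fix j show "\<exists>z::int. (t * of_int q) * real_of_int (e$j) = real_of_int z"
      by (rule exI[of _ "b$j - a$j"]) (use comp in simp)
  qed
  then obtain m where m: "t * of_int q = of_int m" using int_of_real_primitive[OF e_prim e_nz] by blast
  have "b = a + sv m e" using comp m by (simp add: vec_eq_iff) (metis of_int_add of_int_eq_iff of_int_mult)
  then have "m \<in> Zs a" using b by (simp add: Zs_def)
  moreover have "t = of_int m / of_int q" using m q_pos by (simp add: field_simps)
  ultimately show "\<exists>m\<in>Zs a. t = of_int m / of_int q" by blast
next
  assume "\<exists>m\<in>Zs a. t = of_int m / of_int q"
  then obtain m where m: "m \<in> Zs a" "t = of_int m / of_int q" by blast
  have "rv (a + sv m e) = rv a + t *\<^sub>R rv dd" using q_pos
    by (simp add: m(2) vec_eq_iff rv_def dd_sv)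
  then show "online dd f a t" using m unfolding online_def Zs_def by blast
qed

lemma val_eq: "val dd f a = Inf ((\<lambda>m. ereal (of_int m / of_int q)) ` Zs a)"
  unfolding val_def online_iff by (rule arg_cong[where f=Inf]) auto


lemma struct:
  assumes fin: "val dd f a > -\<infinity>"
  obtains m0 mp where "m0 \<in> Zs a" "\<forall>m\<in>Zs a. m0 \<le> m" "mp \<in> Zs a" "m0 \<le> mp" "mp < m0 + q"
    "val dd f a = ereal (of_int m0 / of_int q)" "pval dd f a = of_int mp / of_int q"
    "vpt dd f a = rv (a + sv mp e)"
proof -
  have qp: "real_of_int q > 0" using q_pos by simp
  obtain m1 where m1: "m1 \<in> Zs a" using Zs_ne by blast
  have low: "\<forall>m\<in>Zs a. val dd f a \<le> ereal (of_int m / of_int q)"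
    unfolding val_eq by (auto intro: Inf_lower)
  have "val dd f a \<noteq> \<infinity>" using low m1 by force
  then obtain v where v: "val dd f a = ereal v" using fin by (cases "val dd f a") auto
  have "\<forall>m\<in>Zs a. \<lfloor>v * of_int q\<rfloor> \<le> m"
  proof
    fix m assume "m \<in> Zs a"
    then have "v \<le> of_int m / of_int q" using low v by auto
    then have "v * of_int q \<le> of_int m" using qp by (simp add: field_simps)
    then show "\<lfloor>v * of_int q\<rfloor> \<le> m" by linarith
  qed
  then obtain m0 where m0: "m0 \<in> Zs a" "\<forall>m\<in>Zs a. m0 \<le> m" using int_min_exists[OF m1] by blast
  have dm: "(of_int m0 / of_int q :: real) \<le> of_int m / of_int q" if "m \<in> Zs a" for m :: int
    using m0 that qp by (intro divide_right_mono) auto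
  have valeq: "val dd f a = ereal (of_int m0 / of_int q)"
    unfolding val_eq
    by (rule antisym) (use m0 dm in \<open>auto intro!: Inf_lower Inf_greatest\<close>)
  define P where "P = Zs a \<inter> {m0..<m0+q}"
  have Pf: "finite P" "P \<noteq> {}" using m0 q_pos by (auto simp: P_def)
  define mp where "mp = Max P"
  have mpP: "mp \<in> P" using Pf by (simp add: mp_def)
  have seteq: "{t. real_of_ereal (val dd f a) \<le> t \<and> t < real_of_ereal (val dd f a) + 1 \<and> online dd f a t}
     = (\<lambda>m. of_int m / of_int q) ` P"
  proof (rule set_eqI, rule iffI)
    fix t :: real assume "t \<in> {t. real_of_ereal (val dd f a) \<le> t \<and> t < real_of_ereal (val dd f a) + 1 \<and> online dd f a t}"
    then obtain m where m: "m \<in> Zs a" "t = of_int m / of_int q"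
      "of_int m0 / of_int q \<le> t" "t < of_int m0 / of_int q + 1"
      unfolding online_iff valeq by auto
    have "of_int m < real_of_int m0 + of_int q" using m(2,4) qp by (simp add: field_simps)
    then have "m < m0 + q" by linarith
    then show "t \<in> (\<lambda>m. of_int m / of_int q) ` P" using m m0 by (auto simp: P_def)
  next
    fix t :: real assume "t \<in> (\<lambda>m. of_int m / of_int q) ` P"
    then obtain m where m: "m \<in> Zs a" "t = of_int m / of_int q" "m0 \<le> m" "m < m0 + q"
      by (auto simp: P_def)
    have "real_of_int m < of_int m0 + of_int q" using m by linarith
    then have "t < of_int m0 / of_int q + 1" using m(2) qp by (simp add: field_simps)
    then show "t \<in> {t. real_of_ereal (val dd f a) \<le> t \<and> t < real_of_ereal (val dd f a) + 1 \<and> online dd f a t}"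
      using m dm unfolding online_iff valeq by auto
  qed
  have mono: "mono (\<lambda>m::int. of_int m / (of_int q :: real))"
    using qp by (auto intro!: monoI divide_right_mono)
  have pv: "pval dd f a = of_int mp / of_int q"
    unfolding pval_def seteq mp_def using mono_Max_commute[OF mono Pf] by simp
  have vp: "vpt dd f a = rv (a + sv mp e)"
    unfolding vpt_def pv using qp by (simp add: vec_eq_iff rv_def dd_sv)
  show ?thesis
    by (rule that[OF m0 _ _ _ valeq pv vp]) (use mpP in \<open>auto simp: P_def\<close>)
qed


abbreviation G where "G \<equiv> Vmon' dd f \<inter> WB n h B"
definition E where "E = {g + s | g s. g \<in> G \<and> s \<in> S}"

lemma WB_S: "a \<in> WB n h B \<Longrightarrow> a \<in> S" by (auto simp: WB_def Wbeta_def)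

lemma WB_add: "a \<in> WB n h B \<Longrightarrow> s \<in> S \<Longrightarrow> a + s \<in> WB n h B"
proof -
  assume a: "a \<in> WB n h B" and s: "s \<in> S"
  then obtain \<beta> where b: "\<beta> \<in> B" "a \<in> Wbeta n h \<beta>" by (auto simp: WB_def)
  have "a + s \<in> Wbeta n h \<beta>" using b(2) s
    unfolding Wbeta_def semigp_def by (auto simp: lf_add add_increasing2)
  then show ?thesis using b(1) by (auto simp: WB_def)
qed

lemma G_S: "G \<subseteq> S" using WB_S by auto

lemma E_S: "E \<subseteq> S" using G_S S_add by (auto simp: E_def)

lemma E_add: "b \<in> E \<Longrightarrow> s \<in> S \<Longrightarrow> b + s \<in> E"
proof -
  assume "b \<in> E" "s \<in> S"
  then obtain g t where "b = g + t" "g \<in> G" "t \<in> S" by (auto simp: E_def)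
  then have "b + s = g + (t + s)" "t + s \<in> S" using \<open>s \<in> S\<close> S_add by (auto simp: add.assoc)
  then show "b + s \<in> E" using \<open>g \<in> G\<close> unfolding E_def by blast
qed

lemma struct_WB:
  assumes "a \<in> WB n h B"
  obtains m0 mp where "m0 \<in> Zs a" "\<forall>m\<in>Zs a. m0 \<le> m" "mp \<in> Zs a" "m0 \<le> mp" "mp < m0 + q"
    "val dd f a = ereal (of_int m0 / of_int q)" "pval dd f a = of_int mp / of_int q"
    "vpt dd f a = rv (a + sv mp e)"
  using struct h1 assms by blast

lemma gen_of:
  assumes b: "b \<in> WB n h B" and m0: "m0 \<in> Zs b" "\<forall>m\<in>Zs b. m0 \<le> m" and mp: "mp < m0 + q"
    and valeq: "val dd f b = ereal (of_int m0 / of_int q)" and vp: "vpt dd f b = rv (b + sv mp e)"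
  shows "b + sv mp e \<in> G"
proof -
  have bS: "b \<in> S" using b WB_S by blast
  have inS: "0 \<le> lf (h i) (b + sv mp e)" if i: "i < n" for i
  proof (cases "c i = 0")
    case True then show ?thesis using bS i by (simp add: lf_shift semigp_def)
  next
    case False
    then have cp: "c i > 0" using c_nonneg i by force
    define k where "k = lf (h i) b div c i"
    have "k - q + 1 \<in> Zs b" by (rule block[OF i cp]) (use q_pos in \<open>simp_all add: k_def\<close>)
    then have "m0 \<le> k - q + 1" using m0 by blast
    then have "mp \<le> k" using mp by linarith
    then have "mp * c i \<le> k * c i" using cp by (simp add: mult_right_mono)
    moreover have "k * c i \<le> lf (h i) b" unfolding k_def
      using cp by (metis div_mult_mod_eq le_add_same_cancel1 pos_mod_sign)
    ultimately show ?thesis by (simp add: lf_shift)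
  qed
  have vm: "b + sv mp e \<in> Vmon' dd f" unfolding Vmon'_def
    by (rule CollectI, rule exI[of _ b]) (use valeq vp in simp)
  obtain \<beta> where \<beta>: "\<beta> \<in> B" "b \<in> Wbeta n h \<beta>" using b by (auto simp: WB_def)
  have "b + sv mp e \<in> Wbeta n h \<beta>"
    unfolding Wbeta_def semigp_def
  proof (intro CollectI conjI allI impI)
    fix i assume i: "i < n"
    show "0 \<le> lf (h i) (b + sv mp e)" using inS i .
    show "int (\<beta> i) \<le> lf (h i) (b + sv mp e)"
    proof (cases "\<beta> i = 0")
      case True then show ?thesis using inS i by simp
    next
      case False
      moreover have "\<beta> i = 0 \<or> lf (h i) dd = 0" using B_compat \<beta>(1) i unfolding compatible_def by simp
      ultimately have "lf (h i) dd = 0" by simp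
      then have "c i = 0" using lf_dd[of i] q_pos by (simp add: lf_minus)
      moreover have "int (\<beta> i) \<le> lf (h i) b" using \<beta>(2) i unfolding Wbeta_def by blast
      ultimately show ?thesis by (simp add: lf_shift)
    qed
  qed
  then show ?thesis using vm \<beta> by (auto simp: WB_def)
qed

lemma E_char: "E = {b \<in> WB n h B. pval dd f b \<ge> 0}"
proof (rule set_eqI, rule iffI)
  have qp: "real_of_int q > 0" using q_pos by simp
  fix b assume "b \<in> E"
  then obtain g s where gs: "b = g + s" "g \<in> G" "s \<in> S" by (auto simp: E_def)
  have bW: "b \<in> WB n h B" using gs WB_add by blast
  obtain m0 mp where st: "m0 \<in> Zs b" "\<forall>m\<in>Zs b. m0 \<le> m" "mp \<in> Zs b" "m0 \<le> mp" "mp < m0 + q"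
    "val dd f b = ereal (of_int m0 / of_int q)" "pval dd f b = of_int mp / of_int q"
    "vpt dd f b = rv (b + sv mp e)" using struct_WB[OF bW] by blast
  have "mp \<ge> 0"
  proof (rule ccontr)
    assume neg: "\<not> 0 \<le> mp"
    define g' where "g' = b + sv mp e"
    have "g' \<in> Vmon' dd f" unfolding Vmon'_def g'_def
      by (rule CollectI, rule exI[of _ b]) (use st in simp)
    moreover have "g' = b + sv (-mp) (-e)" by (simp add: g'_def vec_eq_iff)
    then have "g' \<in> WB n h B" using bW neg sv_me_S[of "-mp"] WB_add by simp
    ultimately have g'G: "g' \<in> G" by blast
    have "g' - g = (s + sv (-mp - 1) (-e)) - e" by (simp add: g'_def gs vec_eq_iff algebra_simps)
    moreover have "s + sv (-mp - 1) (-e) \<in> S" using neg by (intro S_add gs sv_me_S) auto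
    ultimately have "g' - g \<in> {s - e | s. s \<in> S}" by blast
    then show False using h3 g'G gs by blast
  qed
  then show "b \<in> {b \<in> WB n h B. pval dd f b \<ge> 0}" using bW st qp by simp
next
  have qp: "real_of_int q > 0" using q_pos by simp
  fix b assume "b \<in> {b \<in> WB n h B. pval dd f b \<ge> 0}"
  then have bW: "b \<in> WB n h B" and pv: "pval dd f b \<ge> 0" by auto
  obtain m0 mp where st: "m0 \<in> Zs b" "\<forall>m\<in>Zs b. m0 \<le> m" "mp \<in> Zs b" "m0 \<le> mp" "mp < m0 + q"
    "val dd f b = ereal (of_int m0 / of_int q)" "pval dd f b = of_int mp / of_int q"
    "vpt dd f b = rv (b + sv mp e)" using struct_WB[OF bW] by blast
  have mp0: "mp \<ge> 0" using pv st qp by (simp add: zero_le_divide_iff)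
  have gG: "b + sv mp e \<in> G" using gen_of[OF bW st(1,2,5,6,8)] .
  have "b = (b + sv mp e) + sv mp (-e)" by (simp add: vec_eq_iff)
  then show "b \<in> E" unfolding E_def using gG sv_me_S[OF mp0] by blast
qed


lemma pm_expand: "(\<Sum>b\<in>Poly_Mapping.keys p. Poly_Mapping.single b (Poly_Mapping.lookup p b)) = (p :: ('a \<Rightarrow>\<^sub>0 'b::comm_monoid_add))"
proof (rule poly_mapping_eqI)
  fix x
  have "(\<Sum>b\<in>Poly_Mapping.keys p. Poly_Mapping.lookup (Poly_Mapping.single b (Poly_Mapping.lookup p b)) x)
      = (\<Sum>b\<in>Poly_Mapping.keys p. if b = x then Poly_Mapping.lookup p b else 0)"
    by (rule sum.cong) (auto simp: lookup_single when_def)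
  also have "\<dots> = Poly_Mapping.lookup p x" by (simp add: in_keys_iff)
  finally show "Poly_Mapping.lookup (\<Sum>b\<in>Poly_Mapping.keys p. Poly_Mapping.single b (Poly_Mapping.lookup p b)) x = Poly_Mapping.lookup p x"
    by (simp add: lookup_sum)
qed

lemma ideal_char: "mon_ideal n h G = {p. Poly_Mapping.keys p \<subseteq> E}"
proof (rule set_eqI, rule iffI)
  fix p assume "p \<in> mon_ideal n h G"
  then obtain F r where p: "p = (\<Sum>a\<in>F. r a * xmon a)" "finite F" "F \<subseteq> G" "\<forall>a\<in>F. r a \<in> ringR n h"
    unfolding mon_ideal_def by blast
  have "Poly_Mapping.keys p \<subseteq> (\<Union>a\<in>F. Poly_Mapping.keys (r a * xmon a))" unfolding p(1) by (rule keys_sum)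
  also have "\<dots> \<subseteq> E"
  proof (rule UN_least)
    fix a assume a: "a \<in> F"
    have "Poly_Mapping.keys (r a * xmon a) \<subseteq> {x + y |x y. x \<in> Poly_Mapping.keys (r a) \<and> y \<in> Poly_Mapping.keys (xmon a)}"
      by (rule keys_mult)
    also have "\<dots> \<subseteq> E"
    proof
      fix z assume "z \<in> {x + y |x y. x \<in> Poly_Mapping.keys (r a) \<and> y \<in> Poly_Mapping.keys (xmon a)}"
      then obtain x where x: "x \<in> Poly_Mapping.keys (r a)" "z = x + a" by (auto simp: xmon_def)
      have "x \<in> S" using p(4) a x(1) by (auto simp: ringR_def)
      moreover have "a \<in> G" using p(3) a by blast
      moreover have "z = a + x" using x(2) by (simp add: add.commute)
      ultimately show "z \<in> E" unfolding E_def by blast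
    qed
    finally show "Poly_Mapping.keys (r a * xmon a) \<subseteq> E" .
  qed
  finally show "p \<in> {p. Poly_Mapping.keys p \<subseteq> E}" by simp
next
  fix p :: "(int^'d) \<Rightarrow>\<^sub>0 complex" assume "p \<in> {p. Poly_Mapping.keys p \<subseteq> E}"
  then have pk: "Poly_Mapping.keys p \<subseteq> E" by simp
  have "\<forall>b\<in>E. \<exists>g. g \<in> G \<and> b - g \<in> S" unfolding E_def by force
  then obtain gf where gf: "\<forall>b\<in>E. gf b \<in> G \<and> b - gf b \<in> S" by metis
  define K where "K = Poly_Mapping.keys p"
  define r where "r a = (\<Sum>b\<in>{b\<in>K. gf b = a}. Poly_Mapping.single (b - a) (Poly_Mapping.lookup p b))" for a
  have fK: "finite K" by (simp add: K_def)
  have "(\<Sum>a\<in>gf ` K. r a * xmon a) = (\<Sum>a\<in>gf ` K. (\<Sum>b\<in>{b\<in>K. gf b = a}. Poly_Mapping.single b (Poly_Mapping.lookup p b)))"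
  proof (rule sum.cong[OF refl])
    fix a assume "a \<in> gf ` K"
    have "r a * xmon a = (\<Sum>b\<in>{b\<in>K. gf b = a}. Poly_Mapping.single (b - a) (Poly_Mapping.lookup p b) * xmon a)"
      unfolding r_def by (rule sum_distrib_right)
    also have "\<dots> = (\<Sum>b\<in>{b\<in>K. gf b = a}. Poly_Mapping.single b (Poly_Mapping.lookup p b))"
      by (rule sum.cong[OF refl]) (simp add: xmon_def mult_single)
    finally show "r a * xmon a = \<dots>" .
  qed
  also have "\<dots> = (\<Sum>b\<in>K. Poly_Mapping.single b (Poly_Mapping.lookup p b))"
    by (rule sum.group) (use fK in auto)
  also have "\<dots> = p" unfolding K_def by (rule pm_expand)
  finally have eq: "p = (\<Sum>a\<in>gf ` K. r a * xmon a)" by simp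
  have rR: "\<forall>a\<in>gf ` K. r a \<in> ringR n h"
  proof
    fix a assume "a \<in> gf ` K"
    have "Poly_Mapping.keys (r a) \<subseteq> (\<Union>b\<in>{b\<in>K. gf b = a}. Poly_Mapping.keys (Poly_Mapping.single (b - a) (Poly_Mapping.lookup p b)))"
      unfolding r_def by (rule keys_sum)
    also have "\<dots> \<subseteq> S" using gf pk unfolding K_def by auto
    finally show "r a \<in> ringR n h" by (simp add: ringR_def)
  qed
  have "gf ` K \<subseteq> G" using gf pk unfolding K_def by auto
  then show "p \<in> mon_ideal n h G" unfolding mon_ideal_def using eq fK rR by blast
qed

lemma Exp_char: "Exp n h (mon_ideal n h G) = E"
  unfolding Exp_def ideal_char using E_S by (auto simp: xmon_def)

lemma lookup_delta: "Poly_Mapping.lookup (delta dd f p) x = Poly_Mapping.lookup p (x - dd) * evalp f (cv (x - dd))"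
proof -
  have "Poly_Mapping.lookup (delta dd f p) x = (\<Sum>a\<in>Poly_Mapping.keys p. if a = x - dd then Poly_Mapping.lookup p a * evalp f (cv a) else 0)"
    unfolding delta_def lookup_sum by (rule sum.cong) (auto simp: lookup_single when_def)
  also have "\<dots> = Poly_Mapping.lookup p (x - dd) * evalp f (cv (x - dd))" by (simp add: in_keys_iff)
  finally show ?thesis .
qed

lemma E_struct:
  assumes "a \<in> E"
  obtains m0 mp where "a \<in> WB n h B" "m0 \<in> Zs a" "\<forall>m\<in>Zs a. m0 \<le> m" "mp \<in> Zs a" "m0 \<le> mp" "mp < m0 + q"
    "val dd f a = ereal (of_int m0 / of_int q)" "vpt dd f a = rv (a + sv mp e)" "0 \<le> mp"
proof -
  have qp: "real_of_int q > 0" using q_pos by simp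
  have aW: "a \<in> WB n h B" and pv: "pval dd f a \<ge> 0" using assms E_char by auto
  obtain m0 mp where st: "m0 \<in> Zs a" "\<forall>m\<in>Zs a. m0 \<le> m" "mp \<in> Zs a" "m0 \<le> mp" "mp < m0 + q"
    "val dd f a = ereal (of_int m0 / of_int q)" "pval dd f a = of_int mp / of_int q"
    "vpt dd f a = rv (a + sv mp e)" using struct_WB[OF aW] by blast
  have "mp \<ge> 0" using pv st qp by (simp add: zero_le_divide_iff)
  then show ?thesis using that aW st by blast
qed

lemma delta_keys: "Poly_Mapping.keys p \<subseteq> E \<Longrightarrow> Poly_Mapping.keys (delta dd f p) \<subseteq> E"
proof
  fix x assume pk: "Poly_Mapping.keys p \<subseteq> E" and x: "x \<in> Poly_Mapping.keys (delta dd f p)"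
  define a where "a = x - dd"
  have nz: "Poly_Mapping.lookup p a \<noteq> 0" "evalp f (cv a) \<noteq> 0"
    using x by (auto simp: in_keys_iff lookup_delta a_def)
  then have aE: "a \<in> E" using pk by (auto simp: in_keys_iff)
  obtain m0 mp where st: "a \<in> WB n h B" "m0 \<in> Zs a" "\<forall>m\<in>Zs a. m0 \<le> m" "mp \<in> Zs a" "m0 \<le> mp" "mp < m0 + q"
    "val dd f a = ereal (of_int m0 / of_int q)" "vpt dd f a = rv (a + sv mp e)" "0 \<le> mp"
    using E_struct[OF aE] by blast
  have gG: "a + sv mp e \<in> G" using gen_of[OF st(1,2,3,6,7,8)] .
  have "mp \<ge> q"
  proof (rule ccontr)
    assume "\<not> q \<le> mp"
    then have "(a + sv mp e) - (\<chi> j. mp * e$j) \<in> Vmon f" using h2 gG st(9) by auto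
    moreover have "(a + sv mp e) - (\<chi> j. mp * e$j) = a" by (simp add: vec_eq_iff)
    ultimately show False using nz(2) by (simp add: Vmon_def)
  qed
  have "x = (a + sv mp e) + sv (mp - q) (-e)" by (simp add: a_def dd_sv vec_eq_iff algebra_simps)
  moreover have "sv (mp - q) (-e) \<in> S" using \<open>mp \<ge> q\<close> by (intro sv_me_S) simp
  ultimately show "x \<in> E" using gG unfolding E_def by blast
qed

lemma nonvan: "x \<in> E \<Longrightarrow> evalp f (cv (x - dd)) \<noteq> 0"
proof
  assume xE: "x \<in> E" and z: "evalp f (cv (x - dd)) = 0"
  obtain m0 mp where st: "x \<in> WB n h B" "m0 \<in> Zs x" "\<forall>m\<in>Zs x. m0 \<le> m" "mp \<in> Zs x" "m0 \<le> mp" "mp < m0 + q"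
    "val dd f x = ereal (of_int m0 / of_int q)" "vpt dd f x = rv (x + sv mp e)" "0 \<le> mp"
    using E_struct[OF xE] by blast
  have eqx: "x + sv (-q) e = x - dd" by (simp add: dd_sv vec_eq_iff)
  have "-q \<in> Zs x" unfolding Zs_def Vmon_def using z by (simp only: eqx mem_Collect_eq)
  then have "m0 \<le> -q" using st by blast
  then show False using st by linarith
qed

lemma delta_surj:
  assumes pk: "Poly_Mapping.keys p \<subseteq> E"
  shows "\<exists>p'. Poly_Mapping.keys p' \<subseteq> E \<and> delta dd f p' = p"
proof -
  define fn where "fn x = Poly_Mapping.lookup p (x + dd) / evalp f (cv x)" for x
  have "{x. fn x \<noteq> 0} \<subseteq> (\<lambda>b. b - dd) ` Poly_Mapping.keys p"
  proof
    fix x assume "x \<in> {x. fn x \<noteq> 0}"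
    then have "x + dd \<in> Poly_Mapping.keys p" by (auto simp: fn_def in_keys_iff)
    then show "x \<in> (\<lambda>b. b - dd) ` Poly_Mapping.keys p" by (auto intro: image_eqI[of _ _ "x + dd"])
  qed
  then have fin: "finite {x. fn x \<noteq> 0}" by (rule finite_subset) simp
  define p' where "p' = Abs_poly_mapping fn"
  have lk: "Poly_Mapping.lookup p' = fn" unfolding p'_def using fin by simp
  have "Poly_Mapping.keys p' \<subseteq> E"
  proof
    fix x assume "x \<in> Poly_Mapping.keys p'"
    then have "x + dd \<in> Poly_Mapping.keys p" by (auto simp: in_keys_iff lk fn_def)
    then have "x + dd \<in> E" using pk by blast
    from E_add[OF this md_S] show "x \<in> E" by simp
  qed
  moreover have "delta dd f p' = p"
  proof (rule poly_mapping_eqI)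
    fix x
    show "Poly_Mapping.lookup (delta dd f p') x = Poly_Mapping.lookup p x"
    proof (cases "Poly_Mapping.lookup p x = 0")
      case True then show ?thesis by (simp add: lookup_delta lk fn_def)
    next
      case False
      then have "x \<in> E" using pk by (auto simp: in_keys_iff)
      then show ?thesis using nonvan by (simp add: lookup_delta lk fn_def)
    qed
  qed
  ultimately show ?thesis by blast
qed

lemma main: "delta dd f ` mon_ideal n h G = mon_ideal n h G
       \<and> Exp n h (mon_ideal n h G) = {b \<in> WB n h B. pval dd f b \<ge> 0}"
proof
  show "Exp n h (mon_ideal n h G) = {b \<in> WB n h B. pval dd f b \<ge> 0}" using Exp_char E_char by simp
  show "delta dd f ` mon_ideal n h G = mon_ideal n h G"
    unfolding ideal_char
  proof
    show "delta dd f ` {p. Poly_Mapping.keys p \<subseteq> E} \<subseteq> {p. Poly_Mapping.keys p \<subseteq> E}"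
      using delta_keys by auto
    show "{p. Poly_Mapping.keys p \<subseteq> E} \<subseteq> delta dd f ` {p. Poly_Mapping.keys p \<subseteq> E}"
      using delta_surj by fastforce
  qed
qed

end

theorem mainTheorem7:
  fixes n :: nat and h :: "nat \<Rightarrow> int^'d::finite"
    and dd e :: "int^'d" and q :: int
    and f :: "('d \<Rightarrow> nat) \<Rightarrow>\<^sub>0 complex"
    and B :: "(nat \<Rightarrow> nat) set"
  assumes cone: "cone_data n h"
    and d_nz: "dd \<noteq> 0"
    and md_S: "-dd \<in> semigp n h"
    and q_pos: "q \<ge> 1" and e_prim: "primitive_vec e" and d_eq: "dd = (\<chi> j. q * e$j)"
    and f_div: "divisible_by_Hd n h dd f"
    and B_compat: "compatible n h dd B"
    and h1: "\<forall>a\<in>WB n h B. val dd f a > -\<infinity>"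
    and h2: "\<forall>a\<in>Vmon' dd f \<inter> WB n h B. \<forall>i::int. 0 \<le> i \<and> i \<le> q - 1 \<longrightarrow>
               a - (\<chi> j. i * e$j) \<in> Vmon f"
    and h3: "\<forall>a\<in>Vmon' dd f \<inter> WB n h B. \<forall>b\<in>Vmon' dd f \<inter> WB n h B.
               a - b \<notin> {s - e | s. s \<in> semigp n h}"
  shows "delta dd f ` mon_ideal n h (Vmon' dd f \<inter> WB n h B) = mon_ideal n h (Vmon' dd f \<inter> WB n h B)
       \<and> Exp n h (mon_ideal n h (Vmon' dd f \<inter> WB n h B)) = {b \<in> WB n h B. pval dd f b \<ge> 0}"
proof -
  interpret T7 n h dd e q f B using assms by unfold_locales
  show ?thesis by (rule main)
qed

end
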